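(* Let $s\in\{1,2\}$, let $k,l\ge 0$ be integers, and let $\mathcal Q(k,l,1,s,1)$ be the set of lattice paths with steps $(1,1)$ (up), $(s,0)$ (flat) and $(1,-1)$ (down), starting at $(0,0)$, having exactly $k+1$ up steps, $k$ down steps and $l$ flat steps (so ending at $(2k+sl+1,1)$). Then (whenever the denominators are nonzero): (1) For each $i=1,\dots,k+1$, the number of such paths that start with an up step and have exactly $i$ up steps starting on or below the $x$-axis is $\frac{1}{k+1}\binom{2k+l}{2k}\binom{2k}{k}$. (2) For each $i=1,\dots,k$, the number of such paths that start with a down step and have exactly $i$ down steps starting on or below the $x$-axis is $\frac1k\binom{2k+l}{2k}\binom{2k}{k-1}$. (3) For each $i=1,\dots,l$, the number of such paths that start with a flat step and have exactly $i$ flat steps starting on or below the $x$-axis is $\frac1l\binom{2k+l}{k}\binom{k+l}{k+1}$. (4) For each $i=1,\dots,k+l+1$, the number of such paths that start with an up or flat step and have exactly $i$ up-or-flat steps starting on or below the $x$-axis is $\frac{1}{k+l+1}\binom{2k+l}{k}\binom{k+l+1}{k+1}$. (5) For each $i=1,\dots,k+l$, the number of such paths that start with a down or flat step and have exactly $i$ down-or-flat steps starting on or below the $x$-axis is $\frac{1}{k+l}\binom{2k+l}{k+1}\binom{k+l}{k}$. (6) For each $i=1,\dots,2k+1$, the number of such paths that start with an up or down step and have exactly $i$ up-or-down steps starting on or below the $x$-axis is $\frac{1}{2k+1}\binom{2k+l}{2k}\binom{2k+1}{k}$. (7) For each $i=1,\dots,2k+l+1$, the number of such paths with exactly $i$ vertices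 on or below the $x$-axis is $\frac{1}{2k+l+1}\binom{2k+l+1}{2k+1}\binom{2k+1}{k}$.
   Context: A step starts on or below the $x$-axis if its initial vertex has $y$-coordinate $\le 0$; a vertex is on or below the $x$-axis if its $y$-coordinate is $\le 0$ (the final vertex, at height $1$, is never counted). *)

theory Defs
  imports Complex_Main
begin

text \<open>A lattice path is the list of its steps, each an integer vector.
  Steps: up (1,1), flat (s,0), down (1,-1). Paths start at (0,0).\<close>

definition up_step :: "int \<times> int" where "up_step = (1, 1)"
definition down_step :: "int \<times> int" where "down_step = (1, -1)"
definition flat_step :: "int \<Rightarrow> int \<times> int" where "flat_step s = (s, 0)"

definition Qpaths :: "nat \<Rightarrow> nat \<Rightarrow> int \<Rightarrow> (int \<times> int) list set" where
  "Qpaths k l s = {p. set p \<subseteq> {up_step, flat_step s, down_step}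
      \<and> count_list p up_step = k + 1
      \<and> count_list p down_step = k
      \<and> count_list p (flat_step s) = l}"

text \<open>y-coordinate of the j-th vertex (vertex 0 is the origin); step j
  (0-indexed) starts at vertex j.\<close>
definition ht :: "(int \<times> int) list \<Rightarrow> nat \<Rightarrow> int" where
  "ht p j = (\<Sum>st \<leftarrow> take j p. snd st)"

definition nlow :: "(int \<times> int) set \<Rightarrow> (int \<times> int) list \<Rightarrow> nat" where
  "nlow S p = card {j. j < length p \<and> p ! j \<in> S \<and> ht p j \<le> 0}"

text \<open>Number of vertices on or below the x-axis (final vertex not counted).\<close>
definition nvert :: "(int \<times> int) list \<Rightarrow> nat" where
  "nvert p = card {j. j < length p \<and> ht p j \<le> 0}"

end

theory Submission imports Defs "HOL-Combinatorics.Multiset_Permutations" begin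

lemma count_list_rotate: "count_list (rotate m xs) x = count_list xs x"
proof -
  have "count_list (rotate m xs) x = count_list (drop (m mod length xs) xs) x + count_list (take (m mod length xs) xs) x"
    by (simp add: rotate_drop_take count_list_append)
  also have "\<dots> = count_list (take (m mod length xs) xs @ drop (m mod length xs) xs) x"
    by (simp only: count_list_append add.commute)
  finally show ?thesis by simp
qed

lemma ht_rotate:
  assumes j: "j < length p" and t: "t \<le> length p"
  shows "ht (rotate j p) t = (if j + t < length p then ht p (j+t) - ht p j
          else ht p (j+t-length p) + sum_list (map snd p) - ht p j)"
proof -
  have r: "rotate j p = drop j p @ take j p" using j by (simp add: rotate_drop_take)
  show ?thesis
  proof (cases "j + t < length p")
    case True
    have "take t (rotate j p) = take t (drop j p)" using True r by simp
    moreover have "take (j+t) p = take j p @ take t (drop j p)" by (simp add: take_add)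
    ultimately show ?thesis using True unfolding ht_def by simp
  next
    case False
    have "take t (rotate j p) = drop j p @ take (j+t-length p) p" using False r j t
      by (simp add: add.commute)
    moreover have "sum_list (map snd p) = sum_list (map snd (take j p)) + sum_list (map snd (drop j p))"
      by (metis append_take_drop_id map_append sum_list_append)
    ultimately show ?thesis using False unfolding ht_def by simp
  qed
qed

lemma key_iff:
  fixes a b :: int and u j n :: nat
  assumes "u < n" "j < n"
  shows "(if j \<le> u then a \<le> b else a < b) \<longleftrightarrow> a * int n - int u \<le> b * int n - int j"
proof (cases "a < b")
  case True
  then have "a \<le> b - 1" by simp
  then have "a * int n \<le> (b - 1) * int n" by (simp add: mult_right_mono)
  then show ?thesis using True assms by (auto simp: algebra_simps)
next
  case False
  show ?thesis
  proof (cases "a = b")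
    case True then show ?thesis using assms by auto
  next
    case F2: False
    then have "b + 1 \<le> a" using False by simp
    then have "(b + 1) * int n \<le> a * int n" by (simp add: mult_right_mono)
    then show ?thesis using False F2 assms by (auto simp: algebra_simps)
  qed
qed

lemma rank_bij:
  fixes f :: "'a \<Rightarrow> int"
  assumes fin: "finite A" and inj: "inj_on f A"
  shows "bij_betw (\<lambda>j. card {u\<in>A. f u \<le> f j}) A {1..card A}"
proof -
  let ?r = "\<lambda>j. card {u\<in>A. f u \<le> f j}"
  have mono: "?r j < ?r j'" if "j \<in> A" "j' \<in> A" "f j < f j'" for j j'
  proof -
    have "{u\<in>A. f u \<le> f j} \<subset> {u\<in>A. f u \<le> f j'}" using that by force
    then show ?thesis by (intro psubset_card_mono) (use fin in auto)
  qed
  have injr: "inj_on ?r A"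
  proof (rule inj_onI)
    fix j j' assume a: "j \<in> A" "j' \<in> A" "?r j = ?r j'"
    show "j = j'"
    proof (rule ccontr)
      assume "j \<noteq> j'"
      then have "f j \<noteq> f j'" using inj a by (meson inj_onD)
      then show False using mono[of j j'] mono[of j' j] a by (cases "f j < f j'") auto
    qed
  qed
  have sub: "?r ` A \<subseteq> {1..card A}"
  proof
    fix x assume "x \<in> ?r ` A"
    then obtain j where j: "j \<in> A" "x = ?r j" by auto
    have "j \<in> {u\<in>A. f u \<le> f j}" using j by simp
    then have "?r j \<ge> 1" using fin by (metis (no_types, lifting) One_nat_def Suc_leI card_gt_0_iff empty_iff finite_subset mem_Collect_eq subsetI)
    moreover have "?r j \<le> card A" using fin by (intro card_mono) auto
    ultimately show "x \<in> {1..card A}" using j by auto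
  qed
  have "card (?r ` A) = card A" using card_image[OF injr] .
  then have "?r ` A = {1..card A}" using sub by (intro card_subset_eq) auto
  then show ?thesis using injr by (simp add: bij_betw_def)
qed

lemma count_main:
  fixes Q T :: "'a list set" and n :: nat
  assumes fin: "finite Q" and len: "\<forall>p\<in>Q. length p = n" and rotQ: "\<forall>p\<in>Q. \<forall>j. rotate j p \<in> Q"
    and one: "\<forall>p\<in>Q. card {j. j < n \<and> rotate j p \<in> T} = 1" and TQ: "T \<subseteq> Q"
  shows "card Q = n * card T"
proof -
  let ?P = "Sigma Q (\<lambda>p. {j. j < n \<and> rotate j p \<in> T})"
  have "card ?P = (\<Sum>p\<in>Q. card {j. j < n \<and> rotate j p \<in> T})"
    using fin by (intro card_SigmaI) auto
  also have "\<dots> = card Q" using one by simp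
  finally have c1: "card ?P = card Q" .
  have bij: "bij_betw (\<lambda>(p,j). (rotate j p, j)) ?P (T \<times> {..<n})"
  proof (rule bij_betw_byWitness[where f' = "\<lambda>(q,j). (rotate (n - j) q, j)"])
    show "\<forall>a\<in>?P. (\<lambda>(q,j). (rotate (n - j) q, j)) ((\<lambda>(p,j). (rotate j p, j)) a) = a"
      using len by (auto simp: rotate_rotate)
    show "\<forall>a\<in>T \<times> {..<n}. (\<lambda>(p,j). (rotate j p, j)) ((\<lambda>(q,j). (rotate (n - j) q, j)) a) = a"
      using len TQ by (auto simp: rotate_rotate)
    show "(\<lambda>(p,j). (rotate j p, j)) ` ?P \<subseteq> T \<times> {..<n}" by auto
    show "(\<lambda>(q,j). (rotate (n - j) q, j)) ` (T \<times> {..<n}) \<subseteq> ?P"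
      using len TQ rotQ by (auto simp: rotate_rotate)
  qed
  then have "card ?P = card (T \<times> {..<n})" by (rule bij_betw_same_card)
  then show ?thesis using c1 by (simp add: card_cartesian_product)
qed


lemma mod_shift: "(j::nat) < n \<Longrightarrow> t < n \<Longrightarrow> (j+t) mod n = (if j+t<n then j+t else j+t-n)"
proof (cases "j+t<n")
  case True then show ?thesis by simp
next
  case False
  assume a: "j < n" "t < n"
  then have "j + t - n < n" by simp
  moreover have "(j+t) mod n = (j+t-n) mod n" using False by (simp add: le_mod_geq)
  ultimately show ?thesis using False by simp
qed

lemma card_shift:
  assumes "j < (n::nat)"
  shows "card {t. t<n \<and> C (if j+t<n then j+t else j+t-n)} = card {u. u<n \<and> C u}"
proof -
  have "bij_betw (\<lambda>t. if j+t<n then j+t else j+t-n) {t. t<n \<and> C (if j+t<n then j+t else j+t-n)} {u. u<n \<and> C u}"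
    by (rule bij_betw_byWitness[where f' = "\<lambda>u. if j \<le> u then u - j else u + n - j"]) (use assms in auto)
  then show ?thesis by (rule bij_betw_same_card)
qed

lemma nlow_rotate:
  assumes j: "j < length p" and sum1: "sum_list (map snd p) = 1"
  shows "nlow S (rotate j p) = card {u. u < length p \<and> p!u \<in> S \<and>
     ht p u * int (length p) - int u \<le> ht p j * int (length p) - int j}"
proof -
  let ?n = "length p"
  let ?H = "ht p"
  let ?C = "\<lambda>u. p!u \<in> S \<and> (if j \<le> u then ?H u \<le> ?H j else ?H u < ?H j)"
  have "nlow S (rotate j p) = card {t. t < ?n \<and> ?C (if j+t<?n then j+t else j+t-?n)}"
    unfolding nlow_def
  proof (intro arg_cong[where f=card] Collect_cong)
    fix t
    show "(t < length (rotate j p) \<and> rotate j p ! t \<in> S \<and> ht (rotate j p) t \<le> 0) =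
          (t < ?n \<and> ?C (if j+t<?n then j+t else j+t-?n))"
    proof (cases "t < ?n")
      case True
      have nth: "rotate j p ! t = p ! (if j+t<?n then j+t else j+t-?n)"
        using True j by (simp add: nth_rotate mod_shift)
      have "ht (rotate j p) t = (if j + t < ?n then ?H (j+t) - ?H j else ?H (j+t-?n) + 1 - ?H j)"
        using ht_rotate[OF j, of t] True sum1 by simp
      then show ?thesis using True nth j by auto
    qed simp
  qed
  also have "\<dots> = card {u. u < ?n \<and> ?C u}" using card_shift[OF j] .
  also have "\<dots> = card {u. u < ?n \<and> p!u \<in> S \<and> ?H u * int ?n - int u \<le> ?H j * int ?n - int j}"
  proof (intro arg_cong[where f=card] Collect_cong)
    fix u show "(u < ?n \<and> ?C u) = (u < ?n \<and> p!u \<in> S \<and> ?H u * int ?n - int u \<le> ?H j * int ?n - int j)"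
      using key_iff[of u ?n j "?H u" "?H j"] j by (cases "u < ?n") auto
  qed
  finally show ?thesis .
qed

lemma uniform_abstract:
  fixes Q :: "(int\<times>int) list set" and n N :: nat and S
  assumes fin: "finite Q" and len: "\<forall>p\<in>Q. length p = n" and n: "n > 0"
    and rotQ: "\<forall>p\<in>Q. \<forall>j. rotate j p \<in> Q"
    and sum1: "\<forall>p\<in>Q. sum_list (map snd p) = 1"
    and NS: "\<forall>p\<in>Q. card {u. u < n \<and> p!u \<in> S} = N"
    and i: "i \<in> {1..N}"
  shows "card Q = n * card {p\<in>Q. p \<noteq> [] \<and> hd p \<in> S \<and> nlow S p = i}"
proof (rule count_main[OF fin len rotQ])
  show "{p\<in>Q. p \<noteq> [] \<and> hd p \<in> S \<and> nlow S p = i} \<subseteq> Q" by auto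
  show "\<forall>p\<in>Q. card {j. j < n \<and> rotate j p \<in> {p\<in>Q. p \<noteq> [] \<and> hd p \<in> S \<and> nlow S p = i}} = 1"
  proof
    fix p assume p: "p \<in> Q"
    define key where "key u = ht p u * int n - int u" for u
    define A where "A = {u. u < n \<and> p!u \<in> S}"
    have lp: "length p = n" using len p by auto
    have finA: "finite A" unfolding A_def by auto
    have injk: "inj_on key A"
    proof (rule inj_onI)
      fix u u' assume "u \<in> A" "u' \<in> A" "key u = key u'"
      then show "u = u'" unfolding A_def key_def
        using key_iff[of u n u' "ht p u" "ht p u'"] key_iff[of u' n u "ht p u'" "ht p u"]
        by (auto split: if_splits)
    qed
    have bij: "bij_betw (\<lambda>j. card {u\<in>A. key u \<le> key j}) A {1..card A}"
      by (rule rank_bij[OF finA injk])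
    have cA: "card A = N" using NS p unfolding A_def by auto
    have eq: "{j. j < n \<and> rotate j p \<in> {p\<in>Q. p \<noteq> [] \<and> hd p \<in> S \<and> nlow S p = i}}
       = {j\<in>A. card {u\<in>A. key u \<le> key j} = i}"
    proof (intro Collect_cong iffI)
      fix j
      assume a: "j < n \<and> rotate j p \<in> {p\<in>Q. p \<noteq> [] \<and> hd p \<in> S \<and> nlow S p = i}"
      then have jn: "j < n" and hd: "hd (rotate j p) \<in> S" and nl: "nlow S (rotate j p) = i" by auto
      have pne: "p \<noteq> []" using lp n by auto
      have "p ! j \<in> S" using hd hd_rotate_conv_nth[OF pne, of j] jn lp by simp
      moreover have "nlow S (rotate j p) = card {u\<in>A. key u \<le> key j}"
        using nlow_rotate[of j p S] jn lp sum1 p unfolding A_def key_def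
        by (simp add: conj_assoc)
      ultimately show "j\<in>A \<and> card {u\<in>A. key u \<le> key j} = i" using nl jn unfolding A_def by auto
    next
      fix j assume a: "j\<in>A \<and> card {u\<in>A. key u \<le> key j} = i"
      then have jn: "j < n" and pj: "p!j \<in> S" unfolding A_def by auto
      have pne: "p \<noteq> []" using lp n by auto
      have "hd (rotate j p) \<in> S" using pj hd_rotate_conv_nth[OF pne, of j] jn lp by simp
      moreover have "nlow S (rotate j p) = card {u\<in>A. key u \<le> key j}"
        using nlow_rotate[of j p S] jn lp sum1 p unfolding A_def key_def
        by (simp add: conj_assoc)
      moreover have "rotate j p \<noteq> []" using pne by simp
      ultimately show "j < n \<and> rotate j p \<in> {p\<in>Q. p \<noteq> [] \<and> hd p \<in> S \<and> nlow S p = i}"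
        using a jn rotQ p by auto
    qed
    have "i \<in> {1..card A}" using i cA by simp
    then obtain j where j: "j \<in> A" "card {u\<in>A. key u \<le> key j} = i"
      using bij unfolding bij_betw_def by (metis (no_types, lifting) imageE)
    have "{j\<in>A. card {u\<in>A. key u \<le> key j} = i} = {j}"
      using j bij unfolding bij_betw_def inj_on_def by auto
    then show "card {j. j < n \<and> rotate j p \<in> {p\<in>Q. p \<noteq> [] \<and> hd p \<in> S \<and> nlow S p = i}} = 1"
      using eq by simp
  qed
qed


lemma dist3: "up_step \<noteq> down_step" "up_step \<noteq> flat_step s" "down_step \<noteq> flat_step s"
  "down_step \<noteq> up_step" "flat_step s \<noteq> up_step" "flat_step s \<noteq> down_step"
  by (auto simp: up_step_def down_step_def flat_step_def)

lemma len_filter3: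
  assumes "set xs \<subseteq> {a,b,c}" "a \<noteq> b" "a \<noteq> c" "b \<noteq> c"
  shows "length (filter P xs) = (if P a then count_list xs a else 0) + (if P b then count_list xs b else 0)
     + (if P c then count_list xs c else 0)"
  using assms by (induction xs) auto

lemma sum_snd3:
  assumes "set xs \<subseteq> {a,b,c}" "a \<noteq> b" "a \<noteq> c" "b \<noteq> c"
  shows "sum_list (map snd xs) = int (count_list xs a) * snd a + int (count_list xs b) * snd b
     + int (count_list xs c) * snd c"
  using assms by (induction xs) (auto simp: algebra_simps)

lemma Q_len: "p \<in> Qpaths k l s \<Longrightarrow> length p = 2*k+l+1"
  using len_filter3[of p up_step "flat_step s" down_step "\<lambda>_. True"] dist3
  unfolding Qpaths_def by auto

lemma Q_sum: "p \<in> Qpaths k l s \<Longrightarrow> sum_list (map snd p) = 1"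
  using sum_snd3[of p up_step "flat_step s" down_step] dist3
  unfolding Qpaths_def by (auto simp: up_step_def down_step_def flat_step_def)

lemma Q_rot: "p \<in> Qpaths k l s \<Longrightarrow> rotate j p \<in> Qpaths k l s"
  unfolding Qpaths_def by (auto simp: count_list_rotate)

lemma Q_NS:
  assumes p: "p \<in> Qpaths k l s"
  shows "card {u. u < 2*k+l+1 \<and> p!u \<in> S} =
    (if up_step \<in> S then k+1 else 0) + (if flat_step s \<in> S then l else 0) + (if down_step \<in> S then k else 0)"
proof -
  have "card {u. u < 2*k+l+1 \<and> p!u \<in> S} = length (filter (\<lambda>x. x \<in> S) p)"
    using Q_len[OF p] by (simp add: length_filter_conv_card)
  also have "\<dots> = (if up_step \<in> S then k+1 else 0) + (if flat_step s \<in> S then l else 0) + (if down_step \<in> S then k else 0)"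
    using len_filter3[of p up_step "flat_step s" down_step "\<lambda>x. x \<in> S"] dist3 p
    unfolding Qpaths_def by auto
  finally show ?thesis .
qed

definition Am :: "nat \<Rightarrow> nat \<Rightarrow> int \<Rightarrow> (int\<times>int) multiset" where
  "Am k l s = replicate_mset (k+1) up_step + replicate_mset k down_step + replicate_mset l (flat_step s)"

lemma Q_perm: "Qpaths k l s = permutations_of_multiset (Am k l s)"
proof (intro set_eqI iffI)
  fix p assume p: "p \<in> Qpaths k l s"
  have "mset p = Am k l s"
  proof (rule multiset_eqI)
    fix x
    show "count (mset p) x = count (Am k l s) x"
    proof (cases "x \<in> {up_step, flat_step s, down_step}")
      case True then show ?thesis using p dist3 unfolding Qpaths_def Am_def
        by (auto simp: count_mset)
    next
      case False
      then have "x \<notin> set p" using p unfolding Qpaths_def by auto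
      then show ?thesis using False unfolding Am_def by (auto simp add: count_mset)
    qed
  qed
  then show "p \<in> permutations_of_multiset (Am k l s)" by (rule permutations_of_multisetI)
next
  fix p assume "p \<in> permutations_of_multiset (Am k l s)"
  then have m: "mset p = Am k l s" by (rule permutations_of_multisetD)
  have "set p = set_mset (Am k l s)" using m by (metis set_mset_mset)
  then have "set p \<subseteq> {up_step, flat_step s, down_step}" unfolding Am_def by auto
  moreover have "count_list p x = count (Am k l s) x" for x using m by (metis count_mset)
  ultimately show "p \<in> Qpaths k l s" unfolding Qpaths_def Am_def using dist3 by auto
qed

lemma card_Q: "card (Qpaths k l s) * (fact (k+1) * fact k * fact l) = fact (2*k+l+1)"
proof -
  have sub: "set_mset (Am k l s) \<subseteq> {up_step, down_step, flat_step s}" unfolding Am_def by auto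
  have "(\<Prod>x\<in>set_mset (Am k l s). fact (count (Am k l s) x) :: nat)
      = (\<Prod>x\<in>{up_step, down_step, flat_step s}. fact (count (Am k l s) x))"
    by (rule prod.mono_neutral_left) (use sub in \<open>auto simp: not_in_iff\<close>)
  also have "\<dots> = fact (k+1) * fact k * fact l" using dist3 unfolding Am_def by simp
  finally have pr: "(\<Prod>x\<in>set_mset (Am k l s). fact (count (Am k l s) x) :: nat) = fact (k+1) * fact k * fact l" .
  have sz: "size (Am k l s) = 2*k+l+1" unfolding Am_def by simp
  show ?thesis using card_permutations_of_multiset_aux[of "Am k l s"] unfolding Q_perm pr sz .
qed

lemma finite_Q: "finite (Qpaths k l s)" unfolding Q_perm by simp

lemma uniformQ:
  assumes "\<forall>p\<in>Qpaths k l s. card {u. u < 2*k+l+1 \<and> p!u \<in> S} = N" "i \<in> {1..N}"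
  shows "real (card {p\<in>Qpaths k l s. p \<noteq> [] \<and> hd p \<in> S \<and> nlow S p = i})
     = (fact (2*k+l) :: real) / (fact (k+1) * fact k * fact l)"
proof -
  have c: "card (Qpaths k l s) = (2*k+l+1) * card {p\<in>Qpaths k l s. p \<noteq> [] \<and> hd p \<in> S \<and> nlow S p = i}"
    by (rule uniform_abstract[OF finite_Q _ _ _ _ assms]) (auto simp: Q_len Q_rot Q_sum)
  define T where "T = card {p\<in>Qpaths k l s. p \<noteq> [] \<and> hd p \<in> S \<and> nlow S p = i}"
  have "(2*k+l+1) * (T * (fact (k+1) * fact k * fact l)) = (2*k+l+1) * fact (2*k+l)"
  proof -
    have e2: "fact (2*k+l+1) = (2*k+l+1) * (fact (2*k+l) :: nat)"
      by simp
    have "(2*k+l+1) * (T * (fact (k+1) * fact k * fact l)) = ((2*k+l+1) * T) * (fact (k+1) * fact k * fact l)"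
      by (simp only: mult.assoc)
    also have "\<dots> = card (Qpaths k l s) * (fact (k+1) * fact k * fact l)" using c T_def by simp
    also have "\<dots> = fact (2*k+l+1)" by (rule card_Q)
    finally show ?thesis using e2 by simp
  qed
  then have "T * (fact (k+1) * fact k * fact l) = (fact (2*k+l) :: nat)"
    by (simp only: mult_left_cancel)
  then have "real T * (fact (k+1) * fact k * fact l) = (fact (2*k+l) :: real)"
    by (metis of_nat_fact of_nat_mult)
  moreover have P0: "(fact (k+1) * fact k * fact l :: real) \<noteq> 0" by (simp del: fact_Suc)
  ultimately show ?thesis unfolding T_def[symmetric] by (metis nonzero_mult_div_cancel_right)
qed

abbreviation "M k l \<equiv> (fact (2*k+l) :: real) / (fact (k+1) * fact k * fact l)"

lemma bf: "k \<le> n \<Longrightarrow> n - k = m \<Longrightarrow> real (n choose k) = fact n / (fact k * fact m)"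
  using binomial_fact[of k n] by simp
lemma fS: "(fact (k+1) :: real) = real (k+1) * fact k" by simp
lemma fP: "k \<ge> 1 \<Longrightarrow> (fact k :: real) = real k * fact (k-1)"
  by (metis One_nat_def Suc_pred fact_Suc less_eq_Suc_le of_nat_fact)

lemma a1: "1 / real (k+1) * real ((2*k+l) choose (2*k)) * real ((2*k) choose k) = M k l"
proof -
  have b1: "real ((2*k+l) choose (2*k)) = fact (2*k+l) / (fact (2*k) * fact l)" by (rule bf) auto
  have b2: "real ((2*k) choose k) = fact (2*k) / (fact k * fact k)" by (rule bf) auto
  have g: "\<And>c F A K L :: real. c>0 \<Longrightarrow> A>0 \<Longrightarrow> K>0 \<Longrightarrow> L>0 \<Longrightarrow> 1/c*(F/(A*L))*(A/(K*K)) = F/((c*K)*K*L)"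
    by (simp add: field_simps)
  show ?thesis unfolding b1 b2 fS by (rule g) auto
qed
lemma a2: "k \<ge> 1 \<Longrightarrow> 1 / real k * real ((2*k+l) choose (2*k)) * real ((2*k) choose (k-1)) = M k l"
proof -
  assume k: "k \<ge> 1"
  have b1: "real ((2*k+l) choose (2*k)) = fact (2*k+l) / (fact (2*k) * fact l)" by (rule bf) auto
  have b2: "real ((2*k) choose (k-1)) = fact (2*k) / (fact (k-1) * fact (k+1))" by (rule bf) (use k in auto)
  have g: "\<And>c F A K L P :: real. c>0 \<Longrightarrow> A>0 \<Longrightarrow> K>0 \<Longrightarrow> L>0 \<Longrightarrow> P > 0 \<Longrightarrow> 1/c*(F/(A*L))*(A/(K*P)) = F/(P*(c*K)*L)"
    by (simp add: field_simps)
  show ?thesis unfolding b1 b2 fP[OF k] by (rule g) (use k in auto)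
qed
lemma a3: "l \<ge> 1 \<Longrightarrow> 1 / real l * real ((2*k+l) choose k) * real ((k+l) choose (k+1)) = M k l"
proof -
  assume l: "l \<ge> 1"
  have b1: "real ((2*k+l) choose k) = fact (2*k+l) / (fact k * fact (k+l))" by (rule bf) auto
  have b2: "real ((k+l) choose (k+1)) = fact (k+l) / (fact (k+1) * fact (l-1))" by (rule bf) (use l in auto)
  have g: "\<And>c F B K L P :: real. c>0 \<Longrightarrow> B>0 \<Longrightarrow> K>0 \<Longrightarrow> L>0 \<Longrightarrow> P > 0 \<Longrightarrow> 1/c*(F/(K*B))*(B/(P*L)) = F/(P*K*(c*L))"
    by (simp add: field_simps)
  show ?thesis unfolding b1 b2 fP[OF l] by (rule g) (use l in auto)
qed
lemma a4: "1 / real (k+l+1) * real ((2*k+l) choose k) * real ((k+l+1) choose (k+1)) = M k l"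
proof -
  have b1: "real ((2*k+l) choose k) = fact (2*k+l) / (fact k * fact (k+l))" by (rule bf) auto
  have b2: "real ((k+l+1) choose (k+1)) = fact (k+l+1) / (fact (k+1) * fact l)" by (rule bf) auto
  have g: "\<And>c F B K L P :: real. c>0 \<Longrightarrow> B>0 \<Longrightarrow> K>0 \<Longrightarrow> L>0 \<Longrightarrow> P > 0 \<Longrightarrow> 1/c*(F/(K*B))*((c*B)/(P*L)) = F/(P*K*L)"
    by (simp add: field_simps)
  show ?thesis unfolding b1 b2 fS[of "k+l"] by (rule g) auto
qed
lemma a5: "k+l \<ge> 1 \<Longrightarrow> 1 / real (k+l) * real ((2*k+l) choose (k+1)) * real ((k+l) choose k) = M k l"
proof -
  assume l: "k+l \<ge> 1"
  have b1: "real ((2*k+l) choose (k+1)) = fact (2*k+l) / (fact (k+1) * fact (k+l-1))" by (rule bf) (use l in auto)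
  have b2: "real ((k+l) choose k) = fact (k+l) / (fact k * fact l)" by (rule bf) auto
  have g: "\<And>c F B K L P :: real. c>0 \<Longrightarrow> B>0 \<Longrightarrow> K>0 \<Longrightarrow> L>0 \<Longrightarrow> P > 0 \<Longrightarrow> 1/c*(F/(P*B))*((c*B)/(K*L)) = F/(P*K*L)"
    by (simp add: field_simps)
  show ?thesis unfolding b1 b2 fP[OF l] by (rule g) (use l in auto)
qed
lemma a6: "1 / real (2*k+1) * real ((2*k+l) choose (2*k)) * real ((2*k+1) choose k) = M k l"
proof -
  have b1: "real ((2*k+l) choose (2*k)) = fact (2*k+l) / (fact (2*k) * fact l)" by (rule bf) auto
  have b2: "real ((2*k+1) choose k) = fact (2*k+1) / (fact k * fact (k+1))" by (rule bf) auto
  have g: "\<And>c F A K L P :: real. c>0 \<Longrightarrow> A>0 \<Longrightarrow> K>0 \<Longrightarrow> L>0 \<Longrightarrow> P > 0 \<Longrightarrow> 1/c*(F/(A*L))*((c*A)/(K*P)) = F/(P*K*L)"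
    by (simp add: field_simps)
  show ?thesis unfolding b1 b2 fS[of "2*k"] by (rule g) auto
qed
lemma a7: "1 / real (2*k+l+1) * real ((2*k+l+1) choose (2*k+1)) * real ((2*k+1) choose k) = M k l"
proof -
  have b1: "real ((2*k+l+1) choose (2*k+1)) = fact (2*k+l+1) / (fact (2*k+1) * fact l)" by (rule bf) auto
  have b2: "real ((2*k+1) choose k) = fact (2*k+1) / (fact k * fact (k+1))" by (rule bf) auto
  have g: "\<And>c F G K L P :: real. c>0 \<Longrightarrow> G>0 \<Longrightarrow> K>0 \<Longrightarrow> L>0 \<Longrightarrow> P > 0 \<Longrightarrow> 1/c*((c*F)/(G*L))*(G/(K*P)) = F/(P*K*L)"
    by (simp add: field_simps)
  show ?thesis unfolding b1 b2 fS[of "2*k+l"] by (rule g) auto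
qed

lemma NSx: "\<forall>p\<in>Qpaths k l s. card {u. u < 2*k+l+1 \<and> p!u \<in> S} =
    (if up_step \<in> S then k+1 else 0) + (if flat_step s \<in> S then l else 0) + (if down_step \<in> S then k else 0)"
  using Q_NS by blast

theorem theorem9:
  fixes k l :: nat and s :: int
  assumes "s \<in> {1, 2}"
  shows
  "(\<forall>i \<in> {1..k+1}. real (card {p \<in> Qpaths k l s. p \<noteq> [] \<and> hd p = up_step
        \<and> nlow {up_step} p = i})
      = 1 / real (k+1) * real ((2*k+l) choose (2*k)) * real ((2*k) choose k))
 \<and> (\<forall>i \<in> {1..k}. real (card {p \<in> Qpaths k l s. p \<noteq> [] \<and> hd p = down_step
        \<and> nlow {down_step} p = i})
      = 1 / real k * real ((2*k+l) choose (2*k)) * real ((2*k) choose (k-1)))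
 \<and> (\<forall>i \<in> {1..l}. real (card {p \<in> Qpaths k l s. p \<noteq> [] \<and> hd p = flat_step s
        \<and> nlow {flat_step s} p = i})
      = 1 / real l * real ((2*k+l) choose k) * real ((k+l) choose (k+1)))
 \<and> (\<forall>i \<in> {1..k+l+1}. real (card {p \<in> Qpaths k l s. p \<noteq> [] \<and> hd p \<in> {up_step, flat_step s}
        \<and> nlow {up_step, flat_step s} p = i})
      = 1 / real (k+l+1) * real ((2*k+l) choose k) * real ((k+l+1) choose (k+1)))
 \<and> (\<forall>i \<in> {1..k+l}. real (card {p \<in> Qpaths k l s. p \<noteq> [] \<and> hd p \<in> {down_step, flat_step s}
        \<and> nlow {down_step, flat_step s} p = i})
      = 1 / real (k+l) * real ((2*k+l) choose (k+1)) * real ((k+l) choose k))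
 \<and> (\<forall>i \<in> {1..2*k+1}. real (card {p \<in> Qpaths k l s. p \<noteq> [] \<and> hd p \<in> {up_step, down_step}
        \<and> nlow {up_step, down_step} p = i})
      = 1 / real (2*k+1) * real ((2*k+l) choose (2*k)) * real ((2*k+1) choose k))
 \<and> (\<forall>i \<in> {1..2*k+l+1}. real (card {p \<in> Qpaths k l s. nvert p = i})
      = 1 / real (2*k+l+1) * real ((2*k+l+1) choose (2*k+1)) * real ((2*k+1) choose k))"
proof (intro conjI ballI)
  fix i assume i: "i \<in> {1..k+1}"
  have N: "\<forall>p\<in>Qpaths k l s. card {u. u < 2*k+l+1 \<and> p!u \<in> {up_step}} = k+1"
    using NSx[of k l s "{up_step}"] dist3 by simp
  have "real (card {p \<in> Qpaths k l s. p \<noteq> [] \<and> hd p \<in> {up_step} \<and> nlow {up_step} p = i}) = M k l"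
    by (rule uniformQ[OF N i])
  then show "real (card {p \<in> Qpaths k l s. p \<noteq> [] \<and> hd p = up_step \<and> nlow {up_step} p = i})
      = 1 / real (k+1) * real ((2*k+l) choose (2*k)) * real ((2*k) choose k)" using a1 by simp
next
  fix i assume i: "i \<in> {1..k}"
  have N: "\<forall>p\<in>Qpaths k l s. card {u. u < 2*k+l+1 \<and> p!u \<in> {down_step}} = k"
    using NSx[of k l s "{down_step}"] dist3 by simp
  have "real (card {p \<in> Qpaths k l s. p \<noteq> [] \<and> hd p \<in> {down_step} \<and> nlow {down_step} p = i}) = M k l"
    by (rule uniformQ[OF N i])
  then show "real (card {p \<in> Qpaths k l s. p \<noteq> [] \<and> hd p = down_step \<and> nlow {down_step} p = i})
      = 1 / real k * real ((2*k+l) choose (2*k)) * real ((2*k) choose (k-1))" using a2[of k l] i by simp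
next
  fix i assume i: "i \<in> {1..l}"
  have N: "\<forall>p\<in>Qpaths k l s. card {u. u < 2*k+l+1 \<and> p!u \<in> {flat_step s}} = l"
    using NSx[of k l s "{flat_step s}"] dist3 by simp
  have "real (card {p \<in> Qpaths k l s. p \<noteq> [] \<and> hd p \<in> {flat_step s} \<and> nlow {flat_step s} p = i}) = M k l"
    by (rule uniformQ[OF N i])
  then show "real (card {p \<in> Qpaths k l s. p \<noteq> [] \<and> hd p = flat_step s \<and> nlow {flat_step s} p = i})
      = 1 / real l * real ((2*k+l) choose k) * real ((k+l) choose (k+1))" using a3[of l k] i by simp
next
  fix i assume i: "i \<in> {1..k+l+1}"
  have N: "\<forall>p\<in>Qpaths k l s. card {u. u < 2*k+l+1 \<and> p!u \<in> {up_step, flat_step s}} = k+l+1"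
    using NSx[of k l s "{up_step, flat_step s}"] dist3 by simp
  have "real (card {p \<in> Qpaths k l s. p \<noteq> [] \<and> hd p \<in> {up_step, flat_step s} \<and> nlow {up_step, flat_step s} p = i}) = M k l"
    by (rule uniformQ[OF N i])
  then show "real (card {p \<in> Qpaths k l s. p \<noteq> [] \<and> hd p \<in> {up_step, flat_step s} \<and> nlow {up_step, flat_step s} p = i})
      = 1 / real (k+l+1) * real ((2*k+l) choose k) * real ((k+l+1) choose (k+1))" using a4[of k l] by simp
next
  fix i assume i: "i \<in> {1..k+l}"
  have N: "\<forall>p\<in>Qpaths k l s. card {u. u < 2*k+l+1 \<and> p!u \<in> {down_step, flat_step s}} = k+l"
    using NSx[of k l s "{down_step, flat_step s}"] dist3 by simp
  have "real (card {p \<in> Qpaths k l s. p \<noteq> [] \<and> hd p \<in> {down_step, flat_step s} \<and> nlow {down_step, flat_step s} p = i}) = M k l"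
    by (rule uniformQ[OF N i])
  then show "real (card {p \<in> Qpaths k l s. p \<noteq> [] \<and> hd p \<in> {down_step, flat_step s} \<and> nlow {down_step, flat_step s} p = i})
      = 1 / real (k+l) * real ((2*k+l) choose (k+1)) * real ((k+l) choose k)" using a5[of k l] i by simp
next
  fix i assume i: "i \<in> {1..2*k+1}"
  have N: "\<forall>p\<in>Qpaths k l s. card {u. u < 2*k+l+1 \<and> p!u \<in> {up_step, down_step}} = 2*k+1"
    using NSx[of k l s "{up_step, down_step}"] dist3 by simp
  have "real (card {p \<in> Qpaths k l s. p \<noteq> [] \<and> hd p \<in> {up_step, down_step} \<and> nlow {up_step, down_step} p = i}) = M k l"
    by (rule uniformQ[OF N i])
  then show "real (card {p \<in> Qpaths k l s. p \<noteq> [] \<and> hd p \<in> {up_step, down_step} \<and> nlow {up_step, down_step} p = i})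
      = 1 / real (2*k+1) * real ((2*k+l) choose (2*k)) * real ((2*k+1) choose k)" using a6[of k l] by simp
next
  fix i assume i: "i \<in> {1..2*k+l+1}"
  have N: "\<forall>p\<in>Qpaths k l s. card {u. u < 2*k+l+1 \<and> p!u \<in> UNIV} = 2*k+l+1"
    using NSx[of k l s UNIV] by simp
  have "real (card {p \<in> Qpaths k l s. p \<noteq> [] \<and> hd p \<in> UNIV \<and> nlow UNIV p = i}) = M k l"
    by (rule uniformQ[OF N i])
  moreover have "{p \<in> Qpaths k l s. p \<noteq> [] \<and> hd p \<in> UNIV \<and> nlow UNIV p = i} = {p \<in> Qpaths k l s. nvert p = i}"
    using Q_len[of _ k l s] unfolding nvert_def nlow_def by fastforce
  ultimately show "real (card {p \<in> Qpaths k l s. nvert p = i})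
      = 1 / real (2*k+l+1) * real ((2*k+l+1) choose (2*k+1)) * real ((2*k+1) choose k)" using a7[of k l] by simp
qed

end
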